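(* Let $K$ be a field of characteristic zero, $S=K[X_0,X_1,Y_0,Y_1]$ bigraded by $\deg X_i=(1,0)$, $\deg Y_i=(0,1)$. Let $\mathbb{Y}=\sum_{(i,j)\in D_{\mathbb{X}}} m_{ij}P_{ij}$ be a fat point scheme in $\mathbb{P}^1\times\mathbb{P}^1$ and let $\mathbb{V}=\sum_{(i,j)\in D_{\mathbb{X}}}(m_{ij}+1)P_{ij}$ be its thickening. Then the sequence of bigraded $R_{\mathbb{Y}}$-modules $$0\longrightarrow I_{\mathbb{Y}}/I_{\mathbb{V}}\longrightarrow R_{\mathbb{Y}}^2(-1,0)\oplus R_{\mathbb{Y}}^2(0,-1)\longrightarrow \Omega^1_{R_{\mathbb{Y}}/K}\longrightarrow 0$$ is exact, where the first map sends $F+I_{\mathbb{V}}$ ($F\in I_{\mathbb{Y}}$) to the class of $dF=\sum_{i}\frac{\partial F}{\partial X_i}dX_i+\sum_i\frac{\partial F}{\partial Y_i}dY_i$ in $\Omega^1_{S/K}/I_{\mathbb{Y}}\Omega^1_{S/K}\cong R_{\mathbb{Y}}^2(-1,0)\oplus R_{\mathbb{Y}}^2(0,-1)$ (basis $dX_0,dX_1,dY_0,dY_1$), and the second map sends $dX_0,dX_1,dY_0,dY_1$ to $dx_0,dx_1,dy_0,dy_1$.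
   Context: Points of $\mathbb{P}^1\times\mathbb{P}^1$ are $K$-rational. For a finite set $\mathbb{X}$ of distinct points, $\pi_1(\mathbb{X})=\{Q_1,\dots,Q_r\}$, $\pi_2(\mathbb{X})=\{R_1,\dots,R_t\}$, $P_{ij}=Q_i\times R_j$, $D_{\mathbb{X}}=\{(i,j)\mid P_{ij}\in\mathbb{X}\}$, $\wp_{ij}$ the (bihomogeneous prime) vanishing ideal of $P_{ij}$. For positive integers $m_{ij}$ the fat point scheme $\mathbb{Y}=\sum m_{ij}P_{ij}$ has ideal $I_{\mathbb{Y}}=\bigcap\wp_{ij}^{m_{ij}}$ and bihomogeneous coordinate ring $R_{\mathbb{Y}}=S/I_{\mathbb{Y}}$; $x_i,y_i$ denote the images of $X_i,Y_i$. $\Omega^1_{R_{\mathbb{Y}}/K}=J/J^2$ where $J$ is the kernel of multiplication $R_{\mathbb{Y}}\otimes_K R_{\mathbb{Y}}\to R_{\mathbb{Y}}$, bigraded with $\deg dx_i=(1,0)$, $\deg dy_i=(0,1)$. For a bigraded module $M$, $M(a,b)_{i,j}=M_{a+i,b+j}$. *)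

theory Defs
  imports Main "HOL-Library.Poly_Mapping"
begin

text \<open>Variables
  0,1,2,3 stand for X0,X1,Y0,Y1; variables 4,5,6,7 are a second copy X0',X1',Y0',Y1'
  used to present the tensor product R_Y (x)_K R_Y.\<close>

type_synonym 'k mpoly = "(nat \<Rightarrow>\<^sub>0 nat) \<Rightarrow>\<^sub>0 'k"

definition Var :: "nat \<Rightarrow> 'k::comm_ring_1 mpoly" where
  "Var i = Poly_Mapping.single (Poly_Mapping.single i 1) 1"

definition Cst :: "'k::comm_ring_1 \<Rightarrow> 'k mpoly" where
  "Cst c = Poly_Mapping.single 0 c"

definition polys_in :: "nat \<Rightarrow> 'k::comm_ring_1 mpoly set" where
  "polys_in n = {f :: 'k mpoly. \<forall>t\<in>Poly_Mapping.keys f. \<forall>i\<in>Poly_Mapping.keys t. i < n}"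

text \<open>S = K[X0,X1,Y0,Y1] and the ring K[X,Y,X',Y'] = S (x)_K S\<close>
abbreviation S4 :: "'k::comm_ring_1 mpoly set" where "S4 \<equiv> polys_in 4"
abbreviation S8 :: "'k::comm_ring_1 mpoly set" where "S8 \<equiv> polys_in 8"

inductive_set ideal_gen :: "'a::comm_ring_1 set \<Rightarrow> 'a set \<Rightarrow> 'a set" for R A where
  zero: "0 \<in> ideal_gen R A"
| step: "r \<in> R \<Longrightarrow> a \<in> A \<Longrightarrow> x \<in> ideal_gen R A \<Longrightarrow> r * a + x \<in> ideal_gen R A"

definition ideal_mult :: "'a::comm_ring_1 set \<Rightarrow> 'a set \<Rightarrow> 'a set \<Rightarrow> 'a set" where
  "ideal_mult R I J = ideal_gen R {a * b | a b. a \<in> I \<and> b \<in> J}"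

fun ideal_pow :: "'a::comm_ring_1 set \<Rightarrow> 'a set \<Rightarrow> nat \<Rightarrow> 'a set" where
  "ideal_pow R I 0 = ideal_gen R {1}"
| "ideal_pow R I (Suc n) = ideal_mult R (ideal_pow R I n) I"

definition pderiv_var :: "nat \<Rightarrow> 'k::comm_ring_1 mpoly \<Rightarrow> 'k mpoly" where
  "pderiv_var i f = (\<Sum>t\<in>Poly_Mapping.keys f.
     Poly_Mapping.single (t - Poly_Mapping.single i 1) (of_nat (Poly_Mapping.lookup t i) * Poly_Mapping.lookup f t))"

text \<open>a point of P^1 x P^1 with K-rational coordinates ([a0:a1],[b0:b1])\<close>
type_synonym 'k pt = "('k \<times> 'k) \<times> ('k \<times> 'k)"

definition valid_pt :: "'k::field pt \<Rightarrow> bool" where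
  "valid_pt P = (case P of ((a0,a1),(b0,b1)) \<Rightarrow> (a0,a1) \<noteq> (0,0) \<and> (b0,b1) \<noteq> (0,0))"

definition proj_eq :: "('k::field \<times> 'k) \<Rightarrow> ('k \<times> 'k) \<Rightarrow> bool" where
  "proj_eq u v = (fst u * snd v = snd u * fst v)"

definition same_pt :: "'k::field pt \<Rightarrow> 'k pt \<Rightarrow> bool" where
  "same_pt P P' = (proj_eq (fst P) (fst P') \<and> proj_eq (snd P) (snd P'))"

definition pt_ideal :: "'k::field pt \<Rightarrow> 'k mpoly set" where
  "pt_ideal P = (case P of ((a0,a1),(b0,b1)) \<Rightarrow>
     ideal_gen S4 {Cst a1 * Var 0 - Cst a0 * Var 1, Cst b1 * Var 2 - Cst b0 * Var 3})"

definition fat_ideal :: "'k::field pt set \<Rightarrow> ('k pt \<Rightarrow> nat) \<Rightarrow> 'k mpoly set" where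
  "fat_ideal X m = S4 \<inter> (\<Inter>P\<in>X. ideal_pow S4 (pt_ideal P) (m P))"

definition shift_mon :: "(nat \<Rightarrow>\<^sub>0 nat) \<Rightarrow> (nat \<Rightarrow>\<^sub>0 nat)" where
  "shift_mon t = (\<Sum>i\<in>Poly_Mapping.keys t. Poly_Mapping.single (i + 4) (Poly_Mapping.lookup t i))"

definition prime_copy :: "'k::comm_ring_1 mpoly \<Rightarrow> 'k mpoly" where
  "prime_copy f = (\<Sum>t\<in>Poly_Mapping.keys f. Poly_Mapping.single (shift_mon t) (Poly_Mapping.lookup f t))"

text \<open>multiplication map S (x) S \<rightarrow> S: X_i' \<mapsto> X_i (variable i \<mapsto> i mod 4)\<close>
definition collapse_mon :: "(nat \<Rightarrow>\<^sub>0 nat) \<Rightarrow> (nat \<Rightarrow>\<^sub>0 nat)" where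
  "collapse_mon t = (\<Sum>i\<in>Poly_Mapping.keys t. Poly_Mapping.single (i mod 4) (Poly_Mapping.lookup t i))"

definition collapse :: "'k::comm_ring_1 mpoly \<Rightarrow> 'k mpoly" where
  "collapse f = (\<Sum>t\<in>Poly_Mapping.keys f. Poly_Mapping.single (collapse_mon t) (Poly_Mapping.lookup f t))"

text \<open>R_Y (x)_K R_Y = S8 / TQ I where TQ I = I (x) S + S (x) I\<close>
definition TQ :: "'k::comm_ring_1 mpoly set \<Rightarrow> 'k mpoly set" where
  "TQ I = ideal_gen S8 (I \<union> prime_copy ` I)"

text \<open>preimage in S8 of J = ker(R_Y (x) R_Y \<rightarrow> R_Y)\<close>
definition Jt :: "'k::comm_ring_1 mpoly set \<Rightarrow> 'k mpoly set" where
  "Jt I = {f \<in> S8. collapse f \<in> I}"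

text \<open>preimage in S8 of J^2; so Omega^1_{R_Y/K} = J/J^2 = Jt I / Nt I\<close>
definition Nt :: "'k::comm_ring_1 mpoly set \<Rightarrow> 'k mpoly set" where
  "Nt I = ideal_gen S8 (ideal_mult S8 (Jt I) (Jt I) \<union> TQ I)"

text \<open>representative of the image of (g0,g1,g2,g3) in R_Y^4 under
  dX_i \<mapsto> dx_i = 1 (x) x_i - x_i (x) 1, R_Y acting on the first factor\<close>
definition omega_map :: "(nat \<Rightarrow> 'k::comm_ring_1 mpoly) \<Rightarrow> 'k mpoly" where
  "omega_map g = (\<Sum>i<4. g i * (Var (i + 4) - Var i))"

end

theory Submission
  imports Defs
begin


lemma pm_update_eq: "a \<notin> Poly_Mapping.keys f \<Longrightarrow> Poly_Mapping.update a b f = Poly_Mapping.single a b + f"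
  by (rule poly_mapping_eqI) (auto simp: lookup_update lookup_add lookup_single when_def in_keys_iff split: if_splits)

lemma pm_induct[case_names zero add]:
  assumes "P 0" and "\<And>a b f. a \<notin> Poly_Mapping.keys f \<Longrightarrow> b \<noteq> 0 \<Longrightarrow> P f \<Longrightarrow> P (Poly_Mapping.single a b + f)"
  shows "P f"
  using assms by (induction f rule: update_induct) (simp_all add: pm_update_eq)

lemma keys_single_add: "a \<notin> Poly_Mapping.keys f \<Longrightarrow> b \<noteq> 0 \<Longrightarrow>
   Poly_Mapping.keys (Poly_Mapping.single a b + f) = insert a (Poly_Mapping.keys f)"
  by (auto simp: in_keys_iff lookup_add lookup_single when_def split: if_splits)

lemma sum_keys_add:
  fixes G :: "'a \<Rightarrow> 'b::monoid_add \<Rightarrow> 'c::comm_monoid_add"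
  assumes "\<And>k. G k 0 = 0" "\<And>k x y. G k (x + y) = G k x + G k y"
  shows "(\<Sum>k\<in>Poly_Mapping.keys (p + q). G k (Poly_Mapping.lookup (p + q) k)) =
   (\<Sum>k\<in>Poly_Mapping.keys p. G k (Poly_Mapping.lookup p k)) + (\<Sum>k\<in>Poly_Mapping.keys q. G k (Poly_Mapping.lookup q k))"
  by (rule setsum_keys_plus_distrib) (use assms in auto)

lemma sum_keys_single:
  fixes G :: "'a \<Rightarrow> 'b::monoid_add \<Rightarrow> 'c::comm_monoid_add"
  assumes "\<And>k. G k 0 = 0"
  shows "(\<Sum>k\<in>Poly_Mapping.keys (Poly_Mapping.single a b). G k (Poly_Mapping.lookup (Poly_Mapping.single a b) k)) = G a b"
  using assms by auto


type_synonym 'k mp = "(nat \<Rightarrow>\<^sub>0 nat) \<Rightarrow>\<^sub>0 'k"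

lemma hom_zero: fixes \<Phi> :: "'a::ab_group_add \<Rightarrow> 'b::ab_group_add" assumes "\<And>f g. \<Phi> (f + g) = \<Phi> f + \<Phi> g" shows "\<Phi> 0 = 0"
  using assms[of 0 0] by simp

lemma hom_mult:
  fixes \<Phi> :: "'k::comm_ring_1 mp \<Rightarrow> 'k mp"
  assumes add: "\<And>f g. \<Phi> (f + g) = \<Phi> f + \<Phi> g"
    and sing: "\<And>s a t b. \<Phi> (Poly_Mapping.single s a * Poly_Mapping.single t b) = \<Phi> (Poly_Mapping.single s a) * \<Phi> (Poly_Mapping.single t b)"
  shows "\<Phi> (f * g) = \<Phi> f * \<Phi> g"
proof -
  have z: "\<Phi> 0 = 0" by (rule hom_zero[OF add])
  have s: "\<Phi> (Poly_Mapping.single s a * g) = \<Phi> (Poly_Mapping.single s a) * \<Phi> g" for s a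
    by (induction g rule: pm_induct) (simp_all add: z distrib_left add sing)
  show ?thesis
    by (induction f rule: pm_induct) (simp_all add: z distrib_right add s)
qed

lemma der_mult:
  fixes \<Phi> :: "'k::comm_ring_1 mp \<Rightarrow> 'k mp"
  assumes add: "\<And>f g. \<Phi> (f + g) = \<Phi> f + \<Phi> g"
    and sing: "\<And>s a t b. \<Phi> (Poly_Mapping.single s a * Poly_Mapping.single t b) = \<Phi> (Poly_Mapping.single s a) * Poly_Mapping.single t b + Poly_Mapping.single s a * \<Phi> (Poly_Mapping.single t b)"
  shows "\<Phi> (f * g) = \<Phi> f * g + f * \<Phi> g"
proof -
  have z: "\<Phi> 0 = 0" by (rule hom_zero[OF add])
  have s: "\<Phi> (Poly_Mapping.single s a * g) = \<Phi> (Poly_Mapping.single s a) * g + Poly_Mapping.single s a * \<Phi> g" for s a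
  proof (induction g rule: pm_induct)
    case (add a' b' f)
    have "\<Phi> (Poly_Mapping.single s a * (Poly_Mapping.single a' b' + f)) =
       \<Phi> (Poly_Mapping.single s a * Poly_Mapping.single a' b') + \<Phi> (Poly_Mapping.single s a * f)"
      by (simp add: distrib_left assms(1))
    also have "\<dots> = \<Phi> (Poly_Mapping.single s a) * (Poly_Mapping.single a' b' + f) +
        Poly_Mapping.single s a * \<Phi> (Poly_Mapping.single a' b' + f)"
      unfolding sing add.IH assms(1) by (simp add: algebra_simps)
    finally show ?case .
  qed (simp add: z)
  show ?thesis
  proof (induction f rule: pm_induct)
    case (add a' b' f)
    have "\<Phi> ((Poly_Mapping.single a' b' + f) * g) =
       \<Phi> (Poly_Mapping.single a' b' * g) + \<Phi> (f * g)"
      by (simp add: distrib_right assms(1))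
    also have "\<dots> = \<Phi> (Poly_Mapping.single a' b' + f) * g + (Poly_Mapping.single a' b' + f) * \<Phi> g"
      unfolding s add.IH assms(1) by (simp add: algebra_simps)
    finally show ?case .
  qed (simp add: z)
qed

lemma hom_uminus: fixes \<Phi> :: "'a::ab_group_add \<Rightarrow> 'b::ab_group_add" assumes "\<And>f g. \<Phi> (f + g) = \<Phi> f + \<Phi> g" shows "\<Phi> (- f) = - \<Phi> f"
  using assms[of f "-f"] hom_zero[OF assms] by (simp add: eq_neg_iff_add_eq_0 add.commute)

lemma hom_diff: fixes \<Phi> :: "'a::ab_group_add \<Rightarrow> 'b::ab_group_add" assumes "\<And>f g. \<Phi> (f + g) = \<Phi> f + \<Phi> g" shows "\<Phi> (f - g) = \<Phi> f - \<Phi> g"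
  using assms[of f "-g"] hom_uminus[OF assms] by simp

lemma pderiv_add: "pderiv_var i (f + g) = pderiv_var i f + pderiv_var i g"
  unfolding pderiv_var_def
  by (rule sum_keys_add) (simp_all add: distrib_left single_add)

lemma pderiv_single: "pderiv_var i (Poly_Mapping.single t c) =
   Poly_Mapping.single (t - Poly_Mapping.single i 1) (of_nat (Poly_Mapping.lookup t i) * c)"
  unfolding pderiv_var_def by (rule sum_keys_single) simp

lemma collapse_mon_add: "collapse_mon (s + t) = collapse_mon s + collapse_mon t"
  unfolding collapse_mon_def by (rule sum_keys_add) (simp_all add: single_add)

lemma collapse_mon_single: "collapse_mon (Poly_Mapping.single i k) = Poly_Mapping.single (i mod 4) k"
  unfolding collapse_mon_def by (rule sum_keys_single) simp

lemma collapse_add: "collapse (f + g) = collapse f + collapse g"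
  unfolding collapse_def by (rule sum_keys_add) (simp_all add: single_add)

lemma collapse_single: "collapse (Poly_Mapping.single t c) = Poly_Mapping.single (collapse_mon t) c"
  unfolding collapse_def by (rule sum_keys_single) simp

lemma shift_mon_add: "shift_mon (s + t) = shift_mon s + shift_mon t"
  unfolding shift_mon_def by (rule sum_keys_add) (simp_all add: single_add)

lemma shift_mon_single: "shift_mon (Poly_Mapping.single i k) = Poly_Mapping.single (i + 4) k"
  unfolding shift_mon_def by (rule sum_keys_single) simp

lemma prime_copy_add: "prime_copy (f + g) = prime_copy f + prime_copy g"
  unfolding prime_copy_def by (rule sum_keys_add) (simp_all add: single_add)

lemma prime_copy_single: "prime_copy (Poly_Mapping.single t c) = Poly_Mapping.single (shift_mon t) c"
  unfolding prime_copy_def by (rule sum_keys_single) simp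

lemma collapse_mult: "collapse (f * g) = collapse f * collapse g"
  by (rule hom_mult) (simp_all add: collapse_add mult_single collapse_single collapse_mon_add)

lemma prime_copy_mult: "prime_copy (f * g) = prime_copy f * prime_copy g"
  by (rule hom_mult) (simp_all add: prime_copy_add mult_single prime_copy_single shift_mon_add)

lemma pderiv_mult: "pderiv_var i (f * g) = pderiv_var i f * g + f * pderiv_var i g"
proof (rule der_mult)
  fix s a t b
  show "pderiv_var i (Poly_Mapping.single s a * Poly_Mapping.single t b) =
    pderiv_var i (Poly_Mapping.single s a) * Poly_Mapping.single t b +
    Poly_Mapping.single s a * pderiv_var i (Poly_Mapping.single t b)"
  proof -
    have e1: "Poly_Mapping.single (s + t - Poly_Mapping.single i 1) (of_nat (Poly_Mapping.lookup s i) * (a * b))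
      = Poly_Mapping.single (s - Poly_Mapping.single i 1 + t) (of_nat (Poly_Mapping.lookup s i) * a * b)"
    proof (cases "Poly_Mapping.lookup s i = 0")
      case False
      have "s + t - Poly_Mapping.single i 1 = s - Poly_Mapping.single i 1 + t"
        using False by (intro poly_mapping_eqI) (auto simp: lookup_add lookup_minus lookup_single when_def)
      then show ?thesis by (simp add: mult.assoc)
    qed simp
    have e2: "Poly_Mapping.single (s + t - Poly_Mapping.single i 1) (of_nat (Poly_Mapping.lookup t i) * (a * b))
      = Poly_Mapping.single (s + (t - Poly_Mapping.single i 1)) (a * (of_nat (Poly_Mapping.lookup t i) * b))"
    proof (cases "Poly_Mapping.lookup t i = 0")
      case False
      have "s + t - Poly_Mapping.single i 1 = s + (t - Poly_Mapping.single i 1)"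
        using False by (intro poly_mapping_eqI) (auto simp: lookup_add lookup_minus lookup_single when_def)
      then show ?thesis by (simp add: algebra_simps)
    qed simp
    have "pderiv_var i (Poly_Mapping.single s a * Poly_Mapping.single t b) =
      Poly_Mapping.single (s + t - Poly_Mapping.single i 1) (of_nat (Poly_Mapping.lookup s i) * (a * b))
      + Poly_Mapping.single (s + t - Poly_Mapping.single i 1) (of_nat (Poly_Mapping.lookup t i) * (a * b))"
      by (simp add: mult_single pderiv_single lookup_add distrib_right flip: single_add)
    also have "\<dots> = pderiv_var i (Poly_Mapping.single s a) * Poly_Mapping.single t b +
    Poly_Mapping.single s a * pderiv_var i (Poly_Mapping.single t b)"
      unfolding e1 e2 by (simp add: mult_single pderiv_single)
    finally show ?thesis .
  qed
qed (rule pderiv_add)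


lemma Cst_add: "Cst (a + b) = Cst a + Cst b" by (simp add: Cst_def single_add)
lemma Cst_diff: "Cst (a - b) = Cst a - Cst b" by (simp add: Cst_def single_diff)
lemma Cst_uminus: "Cst (- a) = - Cst a" by (simp add: Cst_def single_uminus)
lemma Cst_mult: "Cst (a * b) = Cst a * Cst b" by (simp add: Cst_def mult_single)
lemma Cst_0[simp]: "Cst 0 = 0" by (simp add: Cst_def)
lemma Cst_1[simp]: "Cst 1 = 1" by (simp add: Cst_def)

lemma pderiv_Var: "pderiv_var i (Var j) = (if i = j then 1 else 0)"
  by (simp add: Var_def pderiv_single lookup_single)

lemma pderiv_Cst[simp]: "pderiv_var i (Cst c) = 0"
  by (simp add: Cst_def pderiv_single)

lemma pderiv_zero[simp]: "pderiv_var i 0 = 0"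
  by (rule hom_zero) (rule pderiv_add)
lemma pderiv_one[simp]: "pderiv_var i 1 = 0"
  using pderiv_Cst[of i 1] by simp
lemma pderiv_diff: "pderiv_var i (f - g) = pderiv_var i f - pderiv_var i g"
  by (rule hom_diff) (rule pderiv_add)
lemma pderiv_uminus: "pderiv_var i (- f) = - pderiv_var i f"
  by (rule hom_uminus) (rule pderiv_add)
lemma pderiv_Cst_mult: "pderiv_var i (Cst c * f) = Cst c * pderiv_var i f"
  by (simp add: pderiv_mult)

lemma collapse_Var: "collapse (Var j) = Var (j mod 4)"
  by (simp add: Var_def collapse_single collapse_mon_single)
lemma collapse_Cst[simp]: "collapse (Cst c) = Cst c"
  by (simp add: Cst_def collapse_single collapse_mon_def)
lemma collapse_zero[simp]: "collapse 0 = 0"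
  by (rule hom_zero) (rule collapse_add)
lemma collapse_one[simp]: "collapse 1 = 1"
  using collapse_Cst[of 1] by simp
lemma collapse_diff: "collapse (f - g) = collapse f - collapse g"
  by (rule hom_diff) (rule collapse_add)

lemma prime_copy_Var: "prime_copy (Var j) = Var (j + 4)"
  by (simp add: Var_def prime_copy_single shift_mon_single)
lemma prime_copy_Cst[simp]: "prime_copy (Cst c) = Cst c"
  by (simp add: Cst_def prime_copy_single shift_mon_def)
lemma prime_copy_zero[simp]: "prime_copy 0 = 0"
  by (rule hom_zero) (rule prime_copy_add)
lemma prime_copy_diff: "prime_copy (f - g) = prime_copy f - prime_copy g"
  by (rule hom_diff) (rule prime_copy_add)

lemma pin_iff: "f \<in> polys_in n \<longleftrightarrow> (\<forall>t\<in>Poly_Mapping.keys f. \<forall>i\<in>Poly_Mapping.keys t. i < n)"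
  by (simp add: polys_in_def)

lemma pin_add: "f \<in> polys_in n \<Longrightarrow> g \<in> polys_in n \<Longrightarrow> f + g \<in> polys_in n"
  unfolding pin_iff using keys_add[of f g] by blast

lemma pin_uminus: "f \<in> polys_in n \<Longrightarrow> - f \<in> polys_in n"
  unfolding pin_iff by simp

lemma pin_diff: "f \<in> polys_in n \<Longrightarrow> g \<in> polys_in n \<Longrightarrow> f - g \<in> polys_in n"
  using pin_add[of f n "- g"] pin_uminus[of g n] by simp

lemma pin_mult: "f \<in> polys_in n \<Longrightarrow> g \<in> polys_in n \<Longrightarrow> f * g \<in> polys_in n"
  unfolding pin_iff
proof (intro ballI)
  fix t i assume f: "\<forall>t\<in>Poly_Mapping.keys f. \<forall>i\<in>Poly_Mapping.keys t. i < n"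
    and g: "\<forall>t\<in>Poly_Mapping.keys g. \<forall>i\<in>Poly_Mapping.keys t. i < n"
    and t: "t \<in> Poly_Mapping.keys (f * g)" and i: "i \<in> Poly_Mapping.keys t"
  from t keys_mult[of f g] obtain a b where "t = a + b" "a \<in> Poly_Mapping.keys f" "b \<in> Poly_Mapping.keys g" by blast
  with i keys_add[of a b] f g show "i < n" by blast
qed

lemma pin_Var: "i < n \<Longrightarrow> Var i \<in> polys_in n"
  by (simp add: pin_iff Var_def)
lemma pin_Cst: "Cst c \<in> polys_in n"
  by (simp add: pin_iff Cst_def)
lemma pin_0: "0 \<in> polys_in n"
  by (simp add: pin_iff)
lemma pin_1: "1 \<in> polys_in n"
  using pin_Cst[of 1] by simp
lemma pin_mono: "f \<in> polys_in n \<Longrightarrow> n \<le> m \<Longrightarrow> f \<in> polys_in m"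
  unfolding pin_iff by force
lemma pin_sum: "finite A \<Longrightarrow> (\<And>x. x \<in> A \<Longrightarrow> h x \<in> polys_in n) \<Longrightarrow> sum h A \<in> polys_in n"
  by (induction A rule: finite_induct) (auto intro: pin_add pin_0)
lemma pin_power: "f \<in> polys_in n \<Longrightarrow> f ^ k \<in> polys_in n"
  by (induction k) (auto intro: pin_mult pin_1)

lemma pin_induct[consumes 1, case_names Cst Var add mult]:
  fixes f :: "'a::comm_ring_1 mpoly"
  assumes f: "f \<in> polys_in n"
    and cst: "\<And>c. P (Cst c)"
    and var: "\<And>i. i < n \<Longrightarrow> P (Var i)"
    and addP: "\<And>f g. f \<in> polys_in n \<Longrightarrow> g \<in> polys_in n \<Longrightarrow> P f \<Longrightarrow> P g \<Longrightarrow> P (f + g)"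
    and mult: "\<And>f g. f \<in> polys_in n \<Longrightarrow> g \<in> polys_in n \<Longrightarrow> P f \<Longrightarrow> P g \<Longrightarrow> P (f * g)"
  shows "P f"
proof -
  have pw: "P (Var i ^ k)" if "i < n" for i k
  proof (induction k)
    case 0 then show ?case using cst[of 1] by simp
  next
    case (Suc k) then show ?case
      using mult[OF pin_Var[OF that] pin_power[OF pin_Var[OF that]] var[OF that] Suc.IH] by simp
  qed
  have mono: "\<forall>c. P (Poly_Mapping.single t c)" if "\<forall>i\<in>Poly_Mapping.keys t. i < n" for t
    using that
  proof (induction t rule: pm_induct)
    case zero then show ?case using cst by (simp add: Cst_def)
  next
    case (add a b t)
    have kt: "Poly_Mapping.keys (Poly_Mapping.single a b + t) = insert a (Poly_Mapping.keys t)"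
      using keys_single_add[OF add(1,2)] .
    with add.prems have an: "a < n" and tn: "\<forall>i\<in>Poly_Mapping.keys t. i < n" by auto
    have vp: "Var a ^ b = Poly_Mapping.single (Poly_Mapping.single a b) 1"
      by (induction b) (simp_all add: Var_def mult_single single_add[symmetric] add.commute)
    have mem1: "Var a ^ b \<in> polys_in n" by (rule pin_power[OF pin_Var[OF an]])
    have mem2: "Poly_Mapping.single t c \<in> polys_in n" for c
      using tn by (simp add: pin_iff)
    show ?case
    proof
      fix c :: 'a
      have "Poly_Mapping.single (Poly_Mapping.single a b + t) c = Var a ^ b * Poly_Mapping.single t c"
        by (simp add: vp mult_single)
      then show "P (Poly_Mapping.single (Poly_Mapping.single a b + t) c)"
        using mult[OF mem1 mem2 pw[OF an] add.IH[OF tn, rule_format]] by simp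
    qed
  qed
  show ?thesis using f
  proof (induction f rule: pm_induct)
    case zero then show ?case using cst[of 0] by simp
  next
    case (add a b f)
    have k: "Poly_Mapping.keys (Poly_Mapping.single a b + f) = insert a (Poly_Mapping.keys f)"
      using keys_single_add[OF add(1,2)] .
    with add.prems have fn: "f \<in> polys_in n" and an: "\<forall>i\<in>Poly_Mapping.keys a. i < n"
      by (auto simp: pin_iff)
    have sn: "Poly_Mapping.single a b \<in> polys_in n" using an by (simp add: pin_iff)
    show ?case using addP[OF sn fn mono[OF an, rule_format] add.IH[OF fn]] .
  qed
qed


definition subr :: "'a::comm_ring_1 set \<Rightarrow> bool" where
  "subr R \<longleftrightarrow> 0 \<in> R \<and> 1 \<in> R \<and> (\<forall>x\<in>R. \<forall>y\<in>R. x + y \<in> R \<and> x * y \<in> R \<and> - x \<in> R)"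

definition is_ideal :: "'a::comm_ring_1 set \<Rightarrow> 'a set \<Rightarrow> bool" where
  "is_ideal R J \<longleftrightarrow> J \<subseteq> R \<and> 0 \<in> J \<and> (\<forall>x\<in>J. \<forall>y\<in>J. x + y \<in> J) \<and> (\<forall>r\<in>R. \<forall>x\<in>J. r * x \<in> J)"

lemma subr_pin: "subr (polys_in n)"
  by (simp add: subr_def pin_0 pin_1 pin_add pin_mult pin_uminus)

context fixes R :: "'a::comm_ring_1 set" assumes R: "subr R"
begin

lemma R0: "0 \<in> R" and R1: "1 \<in> R" and Radd: "x \<in> R \<Longrightarrow> y \<in> R \<Longrightarrow> x + y \<in> R"
  and Rmult: "x \<in> R \<Longrightarrow> y \<in> R \<Longrightarrow> x * y \<in> R" and Rneg: "x \<in> R \<Longrightarrow> - x \<in> R"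
  using R by (auto simp: subr_def)

lemma Rdiff: "x \<in> R \<Longrightarrow> y \<in> R \<Longrightarrow> x - y \<in> R"
  using Radd[of x "- y"] Rneg[of y] by simp

lemma ig_add: assumes "x \<in> ideal_gen R A" "y \<in> ideal_gen R A" shows "x + y \<in> ideal_gen R A"
  using assms
proof (induction x rule: ideal_gen.induct)
  case zero then show ?case by simp
next
  case (step r a x) then show ?case
    by (metis add.assoc ideal_gen.step)
qed

lemma ig_mult: assumes "r \<in> R" "x \<in> ideal_gen R A" shows "r * x \<in> ideal_gen R A"
  using assms(2)
proof (induction x rule: ideal_gen.induct)
  case zero then show ?case by (simp add: ideal_gen.zero)
next
  case (step s a x)
  have "(r * s) * a + r * x \<in> ideal_gen R A"
    by (rule ideal_gen.step) (use step Rmult[OF assms(1)] in auto)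
  then show ?case by (simp add: algebra_simps)
qed

lemma ig_uminus: "x \<in> ideal_gen R A \<Longrightarrow> - x \<in> ideal_gen R A"
  using ig_mult[of "-1" x A] Rneg[OF R1] by simp

lemma ig_diff: "x \<in> ideal_gen R A \<Longrightarrow> y \<in> ideal_gen R A \<Longrightarrow> x - y \<in> ideal_gen R A"
  using ig_add[of x A "- y"] ig_uminus[of y A] by simp

lemma ig_gen: "a \<in> A \<Longrightarrow> a \<in> ideal_gen R A"
  using ideal_gen.step[OF R1 _ ideal_gen.zero, of a A] by simp

lemma ig_sub: "A \<subseteq> R \<Longrightarrow> ideal_gen R A \<subseteq> R"
proof
  fix x assume A: "A \<subseteq> R" and x: "x \<in> ideal_gen R A"
  from x show "x \<in> R"
    by (induction x rule: ideal_gen.induct) (use A in \<open>auto intro: R0 Radd Rmult\<close>)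
qed

lemma ig_least:
  assumes "0 \<in> J" "\<And>x y. x \<in> J \<Longrightarrow> y \<in> J \<Longrightarrow> x + y \<in> J" "\<And>r x. r \<in> R \<Longrightarrow> x \<in> J \<Longrightarrow> r * x \<in> J" "A \<subseteq> J"
  shows "ideal_gen R A \<subseteq> J"
proof
  fix x assume "x \<in> ideal_gen R A" then show "x \<in> J"
    by (induction x rule: ideal_gen.induct) (use assms in auto)
qed

lemma ig_mono: "A \<subseteq> B \<Longrightarrow> ideal_gen R A \<subseteq> ideal_gen R B"
  by (rule ig_least) (auto intro: ideal_gen.zero ig_add ig_mult ig_gen)

lemma ig_is_ideal: "A \<subseteq> R \<Longrightarrow> is_ideal R (ideal_gen R A)"
  unfolding is_ideal_def using ig_sub by (auto intro: ideal_gen.zero ig_add ig_mult)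

lemma idl_sub: "is_ideal R J \<Longrightarrow> x \<in> J \<Longrightarrow> x \<in> R"
  and idl_0: "is_ideal R J \<Longrightarrow> 0 \<in> J"
  and idl_add: "is_ideal R J \<Longrightarrow> x \<in> J \<Longrightarrow> y \<in> J \<Longrightarrow> x + y \<in> J"
  and idl_mult: "is_ideal R J \<Longrightarrow> r \<in> R \<Longrightarrow> x \<in> J \<Longrightarrow> r * x \<in> J"
  by (auto simp: is_ideal_def)

lemma idl_mult_right: "is_ideal R J \<Longrightarrow> r \<in> R \<Longrightarrow> x \<in> J \<Longrightarrow> x * r \<in> J"
  using idl_mult[of J r x] by (simp add: mult.commute)

lemma idl_uminus: "is_ideal R J \<Longrightarrow> x \<in> J \<Longrightarrow> - x \<in> J"
  using idl_mult[of J "-1" x] Rneg[OF R1] by simp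

lemma idl_diff: "is_ideal R J \<Longrightarrow> x \<in> J \<Longrightarrow> y \<in> J \<Longrightarrow> x - y \<in> J"
  using idl_add[of J x "- y"] idl_uminus[of J y] by simp

lemma idl_sum: assumes "is_ideal R J" "finite A" "\<And>x. x \<in> A \<Longrightarrow> h x \<in> J" shows "sum h A \<in> J"
  using assms(2,3) by (induction A rule: finite_induct) (auto intro: idl_0[OF assms(1)] idl_add[OF assms(1)])

lemma idl_Inter: "(\<And>P. P \<in> X \<Longrightarrow> is_ideal R (J P)) \<Longrightarrow> is_ideal R (R \<inter> (\<Inter>P\<in>X. J P))"
  unfolding is_ideal_def using R0 Radd Rmult by auto

lemma R_ideal: "is_ideal R R"
  unfolding is_ideal_def using R0 Radd Rmult by auto

lemma ip_ideal: "is_ideal R I \<Longrightarrow> is_ideal R (ideal_pow R I n)"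
proof (induction n)
  case 0 then show ?case using ig_is_ideal[of "{1}"] R1 by simp
next
  case (Suc n)
  have "{a * b |a b. a \<in> ideal_pow R I n \<and> b \<in> I} \<subseteq> R"
    using Suc idl_sub Rmult by blast
  then show ?case by (simp add: ideal_mult_def ig_is_ideal)
qed

lemma ip0: "ideal_pow R I 0 = R"
proof
  show "ideal_pow R I 0 \<subseteq> R" using ig_sub[of "{1}"] R1 by simp
  show "R \<subseteq> ideal_pow R I 0"
  proof
    fix x assume "x \<in> R"
    then show "x \<in> ideal_pow R I 0"
      using ideal_gen.step[OF _ _ ideal_gen.zero, of x R 1 "{1}"] by simp
  qed
qed

lemma ip1: "is_ideal R I \<Longrightarrow> ideal_pow R I 1 = I"
proof
  assume I: "is_ideal R I"
  show "ideal_pow R I 1 \<subseteq> I"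
    unfolding One_nat_def ideal_pow.simps(2) ideal_mult_def ip0
    by (rule ig_least) (use I in \<open>auto intro: idl_0 idl_add idl_mult idl_mult_right simp: ip0\<close>)
  show "I \<subseteq> ideal_pow R I 1"
  proof
    fix x assume "x \<in> I"
    then have "1 * x \<in> {a * b |a b. a \<in> ideal_pow R I 0 \<and> b \<in> I}" using R1 ip0 by blast
    then show "x \<in> ideal_pow R I 1" unfolding One_nat_def ideal_pow.simps(2) ideal_mult_def
      using ig_gen by simp
  qed
qed

lemma ip_gen: "is_ideal R I \<Longrightarrow> x \<in> ideal_pow R I n \<Longrightarrow> y \<in> I \<Longrightarrow> x * y \<in> ideal_pow R I (Suc n)"
  unfolding ideal_pow.simps ideal_mult_def by (rule ig_gen) blast

lemma ip_Suc_sub: "is_ideal R I \<Longrightarrow> ideal_pow R I (Suc n) \<subseteq> ideal_pow R I n"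
  unfolding ideal_pow.simps(2) ideal_mult_def
  by (rule ig_least) (auto intro: idl_0 idl_add idl_mult idl_mult_right ip_ideal idl_sub)

lemma ip_mono: "is_ideal R I \<Longrightarrow> n \<le> m \<Longrightarrow> ideal_pow R I m \<subseteq> ideal_pow R I n"
proof (induction m)
  case 0 then show ?case by simp
next
  case (Suc m) then show ?case
    using ip_Suc_sub[of I m] by (cases "n = Suc m") auto
qed

lemma ip_mult: "is_ideal R I \<Longrightarrow> x \<in> ideal_pow R I a \<Longrightarrow> y \<in> ideal_pow R I b \<Longrightarrow> x * y \<in> ideal_pow R I (a + b)"
proof (induction b arbitrary: y)
  case 0 then show ?case using idl_mult_right[OF ip_ideal] ip0 by auto
next
  case (Suc b)
  have "y \<in> ideal_gen R {c * d |c d. c \<in> ideal_pow R I b \<and> d \<in> I}"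
    using Suc.prems by (simp add: ideal_mult_def)
  then show ?case
  proof (induction y rule: ideal_gen.induct)
    case zero then show ?case using idl_0[OF ip_ideal[OF Suc.prems(1)], of "a + Suc b"] by (simp only: mult_zero_right)
  next
    case (step r g z)
    from step.hyps(2) obtain c d where g: "g = c * d" "c \<in> ideal_pow R I b" "d \<in> I" by blast
    have xR: "x \<in> R" using idl_sub[OF ip_ideal[OF Suc.prems(1)] Suc.prems(2)] .
    have "r * (x * c) \<in> ideal_pow R I (a + b)"
      using idl_mult[OF ip_ideal[OF Suc.prems(1)] step.hyps(1) Suc.IH[OF Suc.prems(1,2) g(2)]] .
    then have "r * (x * c) * d \<in> ideal_pow R I (a + Suc b)"
      using ip_gen[OF Suc.prems(1) _ g(3)] by simp
    moreover have "x * (r * g + z) = r * (x * c) * d + x * z" using g by (simp add: algebra_simps)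
    ultimately show ?case
      using idl_add[OF ip_ideal[OF Suc.prems(1)], of "r * (x * c) * d" "a + Suc b" "x * z"] step.IH
      by (simp del: ideal_pow.simps)
  qed
qed

end


declare ideal_pow.simps(2)[simp del]

lemma pderiv_pin: "f \<in> polys_in n \<Longrightarrow> pderiv_var k f \<in> polys_in n"
proof (induction f rule: pin_induct)
  case (Var i) then show ?case by (simp add: pderiv_Var pin_0 pin_1)
qed (auto simp: pderiv_add pderiv_mult pin_0 intro!: pin_add pin_mult)

lemma pderiv_pin_zero: "f \<in> polys_in n \<Longrightarrow> n \<le> k \<Longrightarrow> pderiv_var k f = 0"
proof (induction f rule: pin_induct)
  case (Var i) then show ?case by (simp add: pderiv_Var)
qed (auto simp: pderiv_add pderiv_mult)

lemma subr_S4: "subr (S4 :: 'k::comm_ring_1 mpoly set)" by (rule subr_pin)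

lemma deriv_pow:
  fixes I :: "'k::comm_ring_1 mpoly set"
  assumes I: "is_ideal S4 I"
  shows "f \<in> ideal_pow S4 I (Suc n) \<Longrightarrow> pderiv_var k f \<in> ideal_pow S4 I n"
proof (induction n arbitrary: f)
  case 0
  then have "f \<in> S4" using ip_Suc_sub[OF subr_S4 I, of 0] ip0[OF subr_S4] by auto
  then show ?case using ip0[OF subr_S4] pderiv_pin by auto
next
  case (Suc n)
  let ?P = "ideal_pow S4 I"
  have PI: "is_ideal S4 (?P j)" for j using ip_ideal[OF subr_S4 I] .
  have "f \<in> ideal_gen S4 {c * d |c d. c \<in> ?P (Suc n) \<and> d \<in> I}"
    using Suc.prems by (simp add: ideal_mult_def ideal_pow.simps(2))
  then show ?case
  proof (induction f rule: ideal_gen.induct)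
    case zero then show ?case using idl_0[OF subr_S4 PI] by simp
  next
    case (step r g x)
    from step.hyps(2) obtain c d where g: "g = c * d" "c \<in> ?P (Suc n)" "d \<in> I" by blast
    have cdS: "c * d \<in> ?P (Suc n)"
      using ip_gen[OF subr_S4 I g(2,3)] ip_Suc_sub[OF subr_S4 I, of "Suc n"] by auto
    have dS: "d \<in> S4" using idl_sub[OF subr_S4 I g(3)] .
    have t1: "pderiv_var k r * (c * d) \<in> ?P (Suc n)"
      using idl_mult[OF subr_S4 PI pderiv_pin[OF step.hyps(1)] cdS] .
    have t2: "r * (pderiv_var k c * d) \<in> ?P (Suc n)"
      using idl_mult[OF subr_S4 PI step.hyps(1) ip_gen[OF subr_S4 I Suc.IH[OF g(2)] g(3)]] .
    have t3: "r * (c * pderiv_var k d) \<in> ?P (Suc n)"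
      using idl_mult[OF subr_S4 PI step.hyps(1) idl_mult_right[OF subr_S4 PI pderiv_pin[OF dS] g(2)]] .
    have eq: "pderiv_var k (r * g + x) = pderiv_var k r * (c * d) + r * (pderiv_var k c * d) + r * (c * pderiv_var k d) + pderiv_var k x"
      by (simp add: g pderiv_add pderiv_mult algebra_simps)
    show ?case unfolding eq using t1 t2 t3 step.IH idl_add[OF subr_S4 PI] by presburger
  qed
qed

lemma euler_pow:
  fixes I :: "'k::comm_ring_1 mpoly set" and Dop :: "'k mpoly \<Rightarrow> 'k mpoly"
  assumes G: "G \<subseteq> S4" and Idef: "I = ideal_gen S4 G"
    and Dadd: "\<And>f g. Dop (f + g) = Dop f + Dop g"
    and Dmult: "\<And>f g. Dop (f * g) = Dop f * g + f * Dop g"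
    and DS: "\<And>f. f \<in> S4 \<Longrightarrow> Dop f \<in> I"
    and DG: "\<And>g. g \<in> G \<Longrightarrow> Dop g = g"
  shows "f \<in> ideal_pow S4 I m \<Longrightarrow> Dop f - Cst (of_nat m) * f \<in> ideal_pow S4 I (Suc m)"
proof -
  let ?P = "ideal_pow S4 I"
  have I: "is_ideal S4 I" unfolding Idef using ig_is_ideal[OF subr_S4 G] .
  have PI: "is_ideal S4 (?P j)" for j using ip_ideal[OF subr_S4 I] .
  have P1: "?P 1 = I" using ip1[OF subr_S4 I] .
  have D0: "Dop 0 = 0" using Dadd[of 0 0] by simp
  have I2: "Dop f - f \<in> ?P 2" if "f \<in> I" for f
  proof -
  have "f \<in> ideal_gen S4 G" using that Idef by simp
  then show ?thesis
  proof (induction f rule: ideal_gen.induct)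
    case zero then show ?case using D0 idl_0[OF subr_S4 PI] by simp
  next
    case (step r g x)
    have "Dop r * g \<in> ?P (1 + 1)"
      using ip_mult[OF subr_S4 I, of "Dop r" 1 g 1] DS[OF step.hyps(1)] ig_gen[OF subr_S4 step.hyps(2)] P1 Idef
      by simp
    moreover have eq: "Dop (r * g + x) - (r * g + x) = Dop r * g + (Dop x - x)"
      by (simp add: Dadd Dmult DG[OF step.hyps(2)] algebra_simps)
    ultimately show ?case unfolding eq using step.IH idl_add[OF subr_S4 PI, of "Dop r * g" 2 "Dop x - x"]
      by (simp add: numeral_2_eq_2)
  qed
  qed
  show "f \<in> ?P m \<Longrightarrow> Dop f - Cst (of_nat m) * f \<in> ?P (Suc m)"
  proof (induction m arbitrary: f)
    case 0
    then have "f \<in> S4" using ip0[OF subr_S4, of I] by (simp only:)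
    then show ?case using DS P1 by simp
  next
    case (Suc m)
    have "f \<in> ideal_gen S4 {c * d |c d. c \<in> ?P m \<and> d \<in> I}"
      using Suc.prems by (simp add: ideal_mult_def ideal_pow.simps(2))
    then show ?case
    proof (induction f rule: ideal_gen.induct)
      case zero then show ?case using D0 idl_0[OF subr_S4 PI, of "Suc (Suc m)"] by simp
    next
      case (step r g x)
      from step.hyps(2) obtain c d where g: "g = c * d" "c \<in> ?P m" "d \<in> I" by blast
      have cd: "c * d \<in> ?P (Suc m)" using ip_gen[OF subr_S4 I g(2,3)] .
      have t1: "Dop r * (c * d) \<in> ?P (Suc (Suc m))"
        using ip_mult[OF subr_S4 I, of "Dop r" 1 "c * d" "Suc m"] DS[OF step.hyps(1)] cd P1 by simp
      have t2: "r * ((Dop c - Cst (of_nat m) * c) * d) \<in> ?P (Suc (Suc m))"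
        using idl_mult[OF subr_S4 PI step.hyps(1) ip_gen[OF subr_S4 I Suc.IH[OF g(2)] g(3)]] .
      have t3: "r * (c * (Dop d - d)) \<in> ?P (Suc (Suc m))"
        using idl_mult[OF subr_S4 PI step.hyps(1) ip_mult[OF subr_S4 I g(2) I2[OF g(3)]]] by simp
      have eq: "Dop (r * g + x) - Cst (of_nat (Suc m)) * (r * g + x) =
          Dop r * (c * d) + r * ((Dop c - Cst (of_nat m) * c) * d) + r * (c * (Dop d - d))
          + (Dop x - Cst (of_nat (Suc m)) * x)"
        by (simp add: g Dadd Dmult Cst_add algebra_simps)
      show ?case unfolding eq using t1 t2 t3 step.IH idl_add[OF subr_S4 PI] by presburger
    qed
  qed
qed


lemma pt_gens_S4: "{Cst a1 * Var 0 - Cst a0 * Var 1, Cst b1 * Var 2 - Cst b0 * Var 3} \<subseteq> (S4 :: 'k::comm_ring_1 mpoly set)"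
  by (auto intro!: pin_diff pin_mult pin_Cst pin_Var)

lemma pt_ideal_ideal: "is_ideal S4 (pt_ideal (P :: 'k::field pt))"
proof -
  obtain a0 a1 b0 b1 where P: "P = ((a0, a1), (b0, b1))" by (metis prod.collapse)
  show ?thesis unfolding P pt_ideal_def prod.case by (rule ig_is_ideal[OF subr_S4 pt_gens_S4])
qed

lemma fat_ideal_ideal: "is_ideal S4 (fat_ideal X m)"
  unfolding fat_ideal_def
  by (rule idl_Inter[OF subr_S4]) (rule ip_ideal[OF subr_S4 pt_ideal_ideal])

lemma part1:
  assumes "F \<in> fat_ideal X (\<lambda>P. m P + 1)"
  shows "pderiv_var k F \<in> fat_ideal X m"
proof -
  have "F \<in> S4" "\<forall>P\<in>X. F \<in> ideal_pow S4 (pt_ideal P) (Suc (m P))"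
    using assms unfolding fat_ideal_def by auto
  then show ?thesis unfolding fat_ideal_def using deriv_pow[OF pt_ideal_ideal] pderiv_pin by blast
qed

lemma coeffs_exist:
  fixes a0 a1 :: "'k::field"
  assumes "(a0, a1) \<noteq> (0, 0)"
  shows "\<exists>c0 c1. c0 * a1 - c1 * a0 = 1"
proof (cases "a1 = 0")
  case True
  then have "a0 \<noteq> 0" using assms by auto
  then show ?thesis using True by (intro exI[of _ 0] exI[of _ "- 1 / a0"]) simp
next
  case False
  then show ?thesis by (intro exI[of _ "1 / a1"] exI[of _ 0]) simp
qed

lemma point_step:
  fixes P :: "'k::field_char_0 pt"
  assumes valid: "valid_pt P" and F: "F \<in> ideal_pow S4 (pt_ideal P) m" and m: "0 < m"
    and dF: "\<forall>k<4. pderiv_var k F \<in> ideal_pow S4 (pt_ideal P) m"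
  shows "F \<in> ideal_pow S4 (pt_ideal P) (Suc m)"
proof -
  obtain a0 a1 b0 b1 where P: "P = ((a0, a1), (b0, b1))" by (metis prod.collapse)
  from valid have na: "(a0, a1) \<noteq> (0, 0)" and nb: "(b0, b1) \<noteq> (0, 0)" by (auto simp: P valid_pt_def)
  obtain c0 c1 where c: "c0 * a1 - c1 * a0 = 1" using coeffs_exist[OF na] by blast
  obtain e0 e1 where e: "e0 * b1 - e1 * b0 = 1" using coeffs_exist[OF nb] by blast
  define u :: "'k mpoly" where "u = Cst a1 * Var 0 - Cst a0 * Var 1"
  define v :: "'k mpoly" where "v = Cst b1 * Var 2 - Cst b0 * Var 3"
  define I where "I = pt_ideal P"
  have Idef: "I = ideal_gen S4 {u, v}" by (simp add: I_def P pt_ideal_def u_def v_def)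
  have G: "{u, v} \<subseteq> S4" unfolding u_def v_def by (rule pt_gens_S4)
  have II: "is_ideal S4 I" by (simp add: I_def pt_ideal_ideal)
  have PI: "is_ideal S4 (ideal_pow S4 I j)" for j using ip_ideal[OF subr_S4 II] .
  define Lx where "Lx f = Cst c0 * pderiv_var 0 f + Cst c1 * pderiv_var 1 f" for f :: "'k mpoly"
  define Ly where "Ly f = Cst e0 * pderiv_var 2 f + Cst e1 * pderiv_var 3 f" for f :: "'k mpoly"
  define Dop where "Dop f = u * Lx f + v * Ly f" for f
  have Dadd: "Dop (f + g) = Dop f + Dop g" for f g
    by (simp add: Dop_def Lx_def Ly_def pderiv_add algebra_simps)
  have Dmult: "Dop (f * g) = Dop f * g + f * Dop g" for f g
    by (simp add: Dop_def Lx_def Ly_def pderiv_mult algebra_simps)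
  have LS: "Lx f \<in> S4" "Ly f \<in> S4" if "f \<in> S4" for f
    using that unfolding Lx_def Ly_def by (auto intro!: pin_add pin_mult pin_Cst pderiv_pin)
  have uI: "u \<in> I" and vI: "v \<in> I" unfolding Idef by (auto intro: ig_gen[OF subr_S4])
  have DS: "Dop f \<in> I" if "f \<in> S4" for f
    unfolding Dop_def using ig_mult[OF subr_S4 LS(1)[OF that] uI[unfolded Idef]]
      ig_mult[OF subr_S4 LS(2)[OF that] vI[unfolded Idef]] ig_add[OF subr_S4] Idef
    by (simp add: mult.commute)
  have du: "pderiv_var 0 u = Cst a1" "pderiv_var (Suc 0) u = - Cst a0" "pderiv_var 2 u = 0" "pderiv_var 3 u = 0"
    by (simp_all add: u_def pderiv_diff pderiv_Cst_mult pderiv_Var)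
  have dv: "pderiv_var 0 v = 0" "pderiv_var (Suc 0) v = 0" "pderiv_var 2 v = Cst b1" "pderiv_var 3 v = - Cst b0"
    by (simp_all add: v_def pderiv_diff pderiv_Cst_mult pderiv_Var)
  have Lxu: "Lx u = 1"
  proof -
    have "Lx u = Cst (c0 * a1 - c1 * a0)" by (simp add: Lx_def du Cst_diff Cst_mult)
    then show ?thesis using c by simp
  qed
  have Lyv: "Ly v = 1"
  proof -
    have "Ly v = Cst (e0 * b1 - e1 * b0)" by (simp add: Ly_def dv Cst_diff Cst_mult)
    then show ?thesis using e by simp
  qed
  have DG: "Dop g = g" if "g \<in> {u, v}" for g
  proof -
    have Lyu: "Ly u = 0" by (simp add: Ly_def du)
    have Lxv: "Lx v = 0" by (simp add: Lx_def dv)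
    show ?thesis using that by (auto simp: Dop_def Lxu Lyv Lyu Lxv)
  qed
  have E: "Dop F - Cst (of_nat m) * F \<in> ideal_pow S4 I (Suc m)"
    using euler_pow[OF G Idef Dadd Dmult DS DG] F I_def by blast
  have dFm: "pderiv_var k F \<in> ideal_pow S4 I m" if "k < 4" for k using dF that I_def by blast
  have LxI: "Lx F \<in> ideal_pow S4 I m" and LyI: "Ly F \<in> ideal_pow S4 I m"
    unfolding Lx_def Ly_def using dFm[of 0] dFm[of 1] dFm[of 2] dFm[of 3]
    by (auto intro!: idl_add[OF subr_S4 PI] idl_mult[OF subr_S4 PI] pin_Cst)
  have P1: "ideal_pow S4 I 1 = I" using ip1[OF subr_S4 II] .
  have "u * Lx F \<in> ideal_pow S4 I (1 + m)" using ip_mult[OF subr_S4 II, of u 1 "Lx F" m] uI LxI P1 by simp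
  moreover have "v * Ly F \<in> ideal_pow S4 I (1 + m)" using ip_mult[OF subr_S4 II, of v 1 "Ly F" m] vI LyI P1 by simp
  ultimately have DF: "Dop F \<in> ideal_pow S4 I (Suc m)" unfolding Dop_def using idl_add[OF subr_S4 PI] by simp
  have "Cst (of_nat m) * F = Dop F - (Dop F - Cst (of_nat m) * F)" by simp
  then have mF: "Cst (of_nat m) * F \<in> ideal_pow S4 I (Suc m)"
    using idl_diff[OF subr_S4 PI DF E] by simp
  have "Cst (1 / of_nat m) * (Cst (of_nat m) * F) = Cst (1 / of_nat m * of_nat m) * F"
    by (simp only: Cst_mult mult.assoc)
  also have "1 / of_nat m * of_nat m = (1 :: 'k)" using m by simp
  finally have eq: "Cst (1 / of_nat m) * (Cst (of_nat m) * F) = F" by simp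
  have "Cst (1 / of_nat m) * (Cst (of_nat m) * F) \<in> ideal_pow S4 I (Suc m)"
    using idl_mult[OF subr_S4 PI pin_Cst mF] .
  then show ?thesis unfolding eq I_def .
qed

lemma part2:
  fixes X :: "'k::field_char_0 pt set"
  assumes valid: "\<forall>P\<in>X. valid_pt P" and mpos: "\<forall>P\<in>X. 0 < m P"
    and F: "F \<in> fat_ideal X m" and dF: "\<forall>k<4. pderiv_var k F \<in> fat_ideal X m"
  shows "F \<in> fat_ideal X (\<lambda>P. m P + 1)"
proof -
  have S: "F \<in> S4" and h1: "\<forall>P\<in>X. F \<in> ideal_pow S4 (pt_ideal P) (m P)"
    and h2: "\<forall>P\<in>X. \<forall>k<4. pderiv_var k F \<in> ideal_pow S4 (pt_ideal P) (m P)"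
    using F dF unfolding fat_ideal_def by auto
  have "\<forall>P\<in>X. F \<in> ideal_pow S4 (pt_ideal P) (Suc (m P))"
  proof
    fix P assume "P \<in> X"
    then show "F \<in> ideal_pow S4 (pt_ideal P) (Suc (m P))"
      using point_step[of P F "m P"] valid mpos h1 h2 by simp
  qed
  then show ?thesis using S unfolding fat_ideal_def by simp
qed


lemma subr_S8: "subr (S8 :: 'k::comm_ring_1 mpoly set)" by (rule subr_pin)

lemma S4_S8: "f \<in> S4 \<Longrightarrow> f \<in> S8"
  by (erule pin_mono) simp

lemma hom_sum:
  fixes \<Phi> :: "'a::ab_group_add \<Rightarrow> 'b::ab_group_add"
  assumes "\<And>f g. \<Phi> (f + g) = \<Phi> f + \<Phi> g"
  shows "\<Phi> (sum h A) = (\<Sum>x\<in>A. \<Phi> (h x))"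
proof (cases "finite A")
  case True then show ?thesis
    by (induction A rule: finite_induct) (simp_all add: hom_zero[OF assms] assms)
qed (simp add: hom_zero[OF assms])

lemma collapse_pin4: "f \<in> polys_in n \<Longrightarrow> collapse f \<in> S4"
proof (induction f rule: pin_induct)
  case (Var i) then show ?case by (simp add: collapse_Var pin_Var)
qed (auto simp: collapse_add collapse_mult pin_Cst intro: pin_add pin_mult)

lemma collapse_id: "f \<in> S4 \<Longrightarrow> collapse f = f"
proof (induction f rule: pin_induct)
  case (Var i) then show ?case by (simp add: collapse_Var)
qed (auto simp: collapse_add collapse_mult)

lemma prime_S8: "f \<in> S4 \<Longrightarrow> prime_copy f \<in> S8"
proof (induction f rule: pin_induct)
  case (Var i) then show ?case by (simp add: prime_copy_Var pin_Var)
qed (auto simp: prime_copy_add prime_copy_mult pin_Cst intro: pin_add pin_mult)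

lemma collapse_prime: "f \<in> S4 \<Longrightarrow> collapse (prime_copy f) = f"
proof (induction f rule: pin_induct)
  case (Var i) then show ?case by (simp add: prime_copy_Var collapse_Var)
qed (auto simp: collapse_add collapse_mult prime_copy_add prime_copy_mult)

lemma deriv_prime: "f \<in> S4 \<Longrightarrow> collapse (pderiv_var (i + 4) (prime_copy f)) = pderiv_var i f"
proof (induction f rule: pin_induct)
  case (Var j) then show ?case by (simp add: prime_copy_Var pderiv_Var)
next
  case (add f g) then show ?case by (simp add: prime_copy_add pderiv_add collapse_add)
next
  case (mult f g) then show ?case
    by (simp add: prime_copy_mult pderiv_mult collapse_add collapse_mult collapse_prime)
qed simp

lemma omega_add: "omega_map g + omega_map h = omega_map (\<lambda>i. g i + h i)"
  by (simp add: omega_map_def distrib_right sum.distrib)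

lemma pderiv_sum: "pderiv_var k (sum h A) = (\<Sum>x\<in>A. pderiv_var k (h x))"
  by (induction A rule: infinite_finite_induct) (simp_all add: pderiv_add)

lemma collapse_sum: "collapse (sum h A) = (\<Sum>x\<in>A. collapse (h x))"
  by (induction A rule: infinite_finite_induct) (simp_all add: collapse_add)

lemma omega_scale: "c * omega_map g = omega_map (\<lambda>i. c * g i)"
  by (simp add: omega_map_def sum_distrib_left algebra_simps)

lemma omega_zero: "omega_map (\<lambda>i. 0) = 0"
  by (simp add: omega_map_def)

lemma omega_delta: "k < 4 \<Longrightarrow> omega_map (\<lambda>i. if i = k then 1 else 0) = Var (k + 4) - Var k"
  unfolding omega_map_def
  by (subst sum.cong[OF refl, where h="\<lambda>i. if i = k then Var (k+4) - Var k else 0"]) auto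

lemma omega_pin: "(\<And>i. i < 4 \<Longrightarrow> g i \<in> S8) \<Longrightarrow> omega_map g \<in> S8"
  unfolding omega_map_def by (auto intro!: pin_sum pin_mult pin_diff pin_Var)

lemma collapse_omega: "collapse (omega_map g) = 0"
proof -
  have "collapse (g i * (Var (i + 4) - Var i)) = 0" if "i < 4" for i
    using that by (simp add: collapse_mult collapse_diff collapse_Var)
  then show ?thesis unfolding omega_map_def collapse_sum by simp
qed

lemma deriv_omega:
  assumes g: "\<And>i. i < 4 \<Longrightarrow> g i \<in> S4" and k: "k < 4"
  shows "pderiv_var (k + 4) (omega_map g) = g k"
proof -
  have "pderiv_var (k + 4) (g i * (Var (i + 4) - Var i)) = (if i = k then g k else 0)" if "i < 4" for i
    using that pderiv_pin_zero[OF g[OF that], of "k + 4"]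
    by (simp add: pderiv_mult pderiv_diff pderiv_Var)
  then have "pderiv_var (k + 4) (omega_map g) = (\<Sum>i<4. if i = k then g k else 0)"
    unfolding omega_map_def pderiv_sum by (intro sum.cong) auto
  then show ?thesis using k by simp
qed

context fixes I :: "'k::comm_ring_1 mpoly set" assumes I: "is_ideal S4 I"
begin

lemma I_S4: "x \<in> I \<Longrightarrow> x \<in> S4" using idl_sub[OF subr_S4 I] .

lemma Jt_S8: "Jt I \<subseteq> S8" by (auto simp: Jt_def)

lemma M_S8: "ideal_mult S8 (Jt I) (Jt I) \<subseteq> S8"
  unfolding ideal_mult_def using Jt_S8 by (intro ig_sub[OF subr_S8]) (auto intro: pin_mult)

lemma TQ_S8: "TQ I \<subseteq> S8"
  unfolding TQ_def using I_S4 S4_S8 prime_S8 by (intro ig_sub[OF subr_S8]) auto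

lemma N_ideal: "is_ideal S8 (Nt I)"
  unfolding Nt_def using M_S8 TQ_S8 by (intro ig_is_ideal[OF subr_S8]) auto

lemma TQ_N: "x \<in> TQ I \<Longrightarrow> x \<in> Nt I"
  unfolding Nt_def by (rule ig_gen[OF subr_S8]) simp

lemma M_N: "x \<in> ideal_mult S8 (Jt I) (Jt I) \<Longrightarrow> x \<in> Nt I"
  unfolding Nt_def by (rule ig_gen[OF subr_S8]) simp

lemma I_N: "x \<in> I \<Longrightarrow> x \<in> Nt I"
  by (rule TQ_N) (unfold TQ_def, rule ig_gen[OF subr_S8], simp)

lemma prime_N: "x \<in> I \<Longrightarrow> prime_copy x \<in> Nt I"
  by (rule TQ_N) (unfold TQ_def, rule ig_gen[OF subr_S8], simp)

lemma prod_N: "a \<in> Jt I \<Longrightarrow> b \<in> Jt I \<Longrightarrow> a * b \<in> Nt I"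
  by (rule M_N) (unfold ideal_mult_def, rule ig_gen[OF subr_S8], blast)

lemma omega_Jt: "(\<And>i. i < 4 \<Longrightarrow> g i \<in> S8) \<Longrightarrow> omega_map g \<in> Jt I"
  unfolding Jt_def using omega_pin idl_0[OF subr_S4 I] by (auto simp: collapse_omega)

lemma NI: "is_ideal S8 (Nt I)" by (rule N_ideal)

lemma taylor4: "f \<in> S4 \<Longrightarrow> prime_copy f - f - omega_map (\<lambda>i. pderiv_var i f) \<in> Nt I"
proof (induction f rule: pin_induct)
  case (Cst c) then show ?case using idl_0[OF subr_S8 NI] by (simp add: omega_zero)
next
  case (Var j)
  have eq: "omega_map (\<lambda>i. pderiv_var i (Var j)) = Var (j + 4) - Var j"
    using omega_delta[OF Var] by (simp add: pderiv_Var eq_commute[of j])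
  show ?case using idl_0[OF subr_S8 NI] by (simp add: prime_copy_Var eq)
next
  case (add f g)
  have eq: "prime_copy (f + g) - (f + g) - omega_map (\<lambda>i. pderiv_var i (f + g)) =
    (prime_copy f - f - omega_map (\<lambda>i. pderiv_var i f)) + (prime_copy g - g - omega_map (\<lambda>i. pderiv_var i g))"
    by (simp add: prime_copy_add pderiv_add flip: omega_add)
  show ?case unfolding eq using add.IH idl_add[OF subr_S8 NI] by blast
next
  case (mult f g)
  define a where "a = omega_map (\<lambda>i. pderiv_var i f)"
  define b where "b = omega_map (\<lambda>i. pderiv_var i g)"
  define qa where "qa = prime_copy f - f - a"
  define qb where "qb = prime_copy g - g - b"
  have dS: "\<And>h i. h \<in> S4 \<Longrightarrow> pderiv_var i h \<in> S8" using pderiv_pin S4_S8 by blast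
  have aJ: "a \<in> Jt I" unfolding a_def by (rule omega_Jt) (rule dS[OF mult(1)])
  have bJ: "b \<in> Jt I" unfolding b_def by (rule omega_Jt) (rule dS[OF mult(2)])
  have aS: "a \<in> S8" using aJ Jt_S8 by blast
  have "omega_map (\<lambda>i. pderiv_var i (f * g)) = g * a + f * b"
    by (simp add: a_def b_def pderiv_mult omega_scale omega_add algebra_simps)
  then have eq: "prime_copy (f * g) - f * g - omega_map (\<lambda>i. pderiv_var i (f * g)) =
     a * b + qa * prime_copy g + (f + a) * qb"
    by (simp add: prime_copy_mult qa_def qb_def algebra_simps)
  have "a * b \<in> Nt I" by (rule prod_N[OF aJ bJ])
  moreover have "qa * prime_copy g \<in> Nt I"
    using idl_mult_right[OF subr_S8 NI prime_S8[OF mult(2)]] mult.IH qa_def a_def by simp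
  moreover have "(f + a) * qb \<in> Nt I"
    using idl_mult[OF subr_S8 NI pin_add[OF S4_S8[OF mult(1)] aS]] mult.IH qb_def b_def by simp
  ultimately show ?case unfolding eq using idl_add[OF subr_S8 NI] by simp
qed

lemma taylor8: "h \<in> S8 \<Longrightarrow> \<exists>g. (\<forall>i<4. g i \<in> S4) \<and> h - collapse h - omega_map g \<in> Nt I"
proof (induction h rule: pin_induct)
  case (Cst c) then show ?case using idl_0[OF subr_S8 NI] by (intro exI[of _ "\<lambda>i. 0"]) (simp add: omega_zero pin_0)
next
  case (Var j)
  show ?case
  proof (cases "j < 4")
    case True then show ?thesis using idl_0[OF subr_S8 NI]
      by (intro exI[of _ "\<lambda>i. 0"]) (simp add: omega_zero pin_0 collapse_Var)
  next
    case False
    define k where "k = j - 4"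
    have k: "k < 4" "j = k + 4" using False Var by (auto simp: k_def)
    have "(Var j :: 'k mpoly) - collapse (Var j) - omega_map (\<lambda>i. if i = k then 1 else 0) = 0"
      unfolding omega_delta[OF k(1)] k(2) using k(1) by (simp add: collapse_Var)
    then show ?thesis using idl_0[OF subr_S8 NI]
      by (intro exI[of _ "\<lambda>i. if i = k then 1 else 0"]) (simp add: pin_0 pin_1)
  qed
next
  case (add f g)
  from add.IH obtain ga gb where ga: "\<forall>i<4. ga i \<in> S4" "f - collapse f - omega_map ga \<in> Nt I"
    and gb: "\<forall>i<4. gb i \<in> S4" "g - collapse g - omega_map gb \<in> Nt I" by blast
  have eq: "f + g - collapse (f + g) - omega_map (\<lambda>i. ga i + gb i) =
      (f - collapse f - omega_map ga) + (g - collapse g - omega_map gb)"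
    by (simp add: collapse_add flip: omega_add)
  have "f + g - collapse (f + g) - omega_map (\<lambda>i. ga i + gb i) \<in> Nt I"
    unfolding eq using ga gb idl_add[OF subr_S8 NI] by blast
  then show ?case using ga gb
    by (intro exI[of _ "\<lambda>i. ga i + gb i"]) (auto intro: pin_add)
next
  case (mult f g)
  from mult.IH obtain ga gb where ga: "\<forall>i<4. ga i \<in> S4" "f - collapse f - omega_map ga \<in> Nt I"
    and gb: "\<forall>i<4. gb i \<in> S4" "g - collapse g - omega_map gb \<in> Nt I" by blast
  define a where "a = omega_map ga"
  define b where "b = omega_map gb"
  define qa where "qa = f - collapse f - a"
  define qb where "qb = g - collapse g - b"
  have aJ: "a \<in> Jt I" unfolding a_def using omega_Jt ga S4_S8 by blast
  have bJ: "b \<in> Jt I" unfolding b_def using omega_Jt gb S4_S8 by blast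
  have aS: "a \<in> S8" using aJ Jt_S8 by blast
  have cf: "collapse f \<in> S4" "collapse g \<in> S4" using collapse_pin4 mult(1,2) by blast+
  have om: "omega_map (\<lambda>i. collapse f * gb i + collapse g * ga i) = collapse f * b + collapse g * a"
    by (simp only: a_def b_def omega_scale omega_add)
  have "f * g - collapse (f * g) - omega_map (\<lambda>i. collapse f * gb i + collapse g * ga i) =
     a * b + qa * g + (collapse f + a) * qb"
    unfolding om by (simp add: collapse_mult qa_def qb_def algebra_simps)
  moreover have "a * b \<in> Nt I" by (rule prod_N[OF aJ bJ])
  moreover have "qa * g \<in> Nt I"
    using idl_mult_right[OF subr_S8 NI mult(2)] ga qa_def a_def by simp
  moreover have "(collapse f + a) * qb \<in> Nt I"
    using idl_mult[OF subr_S8 NI pin_add[OF S4_S8[OF cf(1)] aS]] gb qb_def b_def by simp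
  ultimately show ?case using idl_add[OF subr_S8 NI] ga gb cf
    by (intro exI[of _ "\<lambda>i. collapse f * gb i + collapse g * ga i"]) (auto intro!: pin_add pin_mult)
qed

end


context fixes I :: "'k::comm_ring_1 mpoly set" assumes I: "is_ideal S4 I"
begin

definition Jd :: "'k mpoly set" where
  "Jd = {h \<in> S8. collapse h \<in> I \<and> (\<exists>G\<in>I. \<forall>i<4. collapse (pderiv_var (i + 4) h) - pderiv_var i G \<in> I)}"

lemma Jd_0: "0 \<in> Jd"
  unfolding Jd_def using idl_0[OF subr_S4 I] pin_0 by force

lemma Jd_add: assumes "x \<in> Jd" "y \<in> Jd" shows "x + y \<in> Jd"
proof -
  from assms obtain G G' where x: "x \<in> S8" "collapse x \<in> I" "G \<in> I" "\<forall>i<4. collapse (pderiv_var (i + 4) x) - pderiv_var i G \<in> I"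
    and y: "y \<in> S8" "collapse y \<in> I" "G' \<in> I" "\<forall>i<4. collapse (pderiv_var (i + 4) y) - pderiv_var i G' \<in> I"
    unfolding Jd_def by blast
  have eq: "collapse (pderiv_var (i + 4) (x + y)) - pderiv_var i (G + G') =
      (collapse (pderiv_var (i + 4) x) - pderiv_var i G) + (collapse (pderiv_var (i + 4) y) - pderiv_var i G')" for i
    by (simp add: pderiv_add collapse_add)
  have "\<forall>i<4. collapse (pderiv_var (i + 4) (x + y)) - pderiv_var i (G + G') \<in> I"
    unfolding eq using x y idl_add[OF subr_S4 I] by blast
  moreover have "x + y \<in> S8" using pin_add[OF x(1) y(1)] .
  moreover have "collapse (x + y) \<in> I" unfolding collapse_add using idl_add[OF subr_S4 I x(2) y(2)] .
  moreover have "G + G' \<in> I" using idl_add[OF subr_S4 I x(3) y(3)] .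
  ultimately show ?thesis unfolding Jd_def by blast
qed

lemma Jd_mult: assumes r: "r \<in> S8" and h: "h \<in> Jd" shows "r * h \<in> Jd"
proof -
  from h obtain G where x: "h \<in> S8" "collapse h \<in> I" "G \<in> I" "\<forall>i<4. collapse (pderiv_var (i + 4) h) - pderiv_var i G \<in> I"
    unfolding Jd_def by blast
  have cr: "collapse r \<in> S4" using collapse_pin4 r by blast
  have GS: "G \<in> S4" using idl_sub[OF subr_S4 I x(3)] .
  have eq: "collapse (pderiv_var (i + 4) (r * h)) - pderiv_var i (collapse r * G) =
     collapse (pderiv_var (i + 4) r) * collapse h + collapse r * (collapse (pderiv_var (i + 4) h) - pderiv_var i G)
     - pderiv_var i (collapse r) * G" for i
    by (simp add: pderiv_mult collapse_add collapse_mult algebra_simps)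
  have "\<forall>i<4. collapse (pderiv_var (i + 4) (r * h)) - pderiv_var i (collapse r * G) \<in> I"
  proof (intro allI impI)
    fix i :: nat assume i: "i < 4"
    have t1: "collapse (pderiv_var (i + 4) r) * collapse h \<in> I"
      using idl_mult[OF subr_S4 I collapse_pin4[OF pderiv_pin[OF r]] x(2)] .
    have t2: "collapse r * (collapse (pderiv_var (i + 4) h) - pderiv_var i G) \<in> I"
      using idl_mult[OF subr_S4 I cr] x(4) i by blast
    have t3: "pderiv_var i (collapse r) * G \<in> I"
      using idl_mult[OF subr_S4 I pderiv_pin[OF cr] x(3)] .
    show "collapse (pderiv_var (i + 4) (r * h)) - pderiv_var i (collapse r * G) \<in> I"
      unfolding eq using t1 t2 t3 idl_add[OF subr_S4 I] idl_diff[OF subr_S4 I] by blast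
  qed
  moreover have "collapse r * G \<in> I" using idl_mult[OF subr_S4 I cr x(3)] .
  moreover have "collapse (r * h) \<in> I" using idl_mult[OF subr_S4 I cr x(2)] by (simp add: collapse_mult)
  moreover have "r * h \<in> S8" using pin_mult[OF r x(1)] .
  ultimately show ?thesis unfolding Jd_def by blast
qed

lemma M_Jd: "ideal_mult S8 (Jt I) (Jt I) \<subseteq> Jd"
  unfolding ideal_mult_def
proof (rule ig_least[OF subr_S8])
  show "{a * b |a b. a \<in> Jt I \<and> b \<in> Jt I} \<subseteq> Jd"
  proof
    fix x assume "x \<in> {a * b |a b. a \<in> Jt I \<and> b \<in> Jt I}"
    then obtain a b where x: "x = a * b" and a: "a \<in> S8" "collapse a \<in> I" and b: "b \<in> S8" "collapse b \<in> I"
      unfolding Jt_def by blast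
    have ab: "collapse (a * b) \<in> I" using idl_mult[OF subr_S4 I collapse_pin4[OF a(1)] b(2)] by (simp add: collapse_mult)
    have "\<forall>i<4. collapse (pderiv_var (i + 4) (a * b)) - pderiv_var i 0 \<in> I"
    proof (intro allI impI)
      fix i :: nat
      have "collapse (pderiv_var (i + 4) (a * b)) =
         collapse (pderiv_var (i + 4) a) * collapse b + collapse (pderiv_var (i + 4) b) * collapse a"
        by (simp add: pderiv_mult collapse_add collapse_mult mult.commute)
      then show "collapse (pderiv_var (i + 4) (a * b)) - pderiv_var i 0 \<in> I"
        using idl_add[OF subr_S4 I idl_mult[OF subr_S4 I collapse_pin4[OF pderiv_pin[OF a(1)]] b(2)]
            idl_mult[OF subr_S4 I collapse_pin4[OF pderiv_pin[OF b(1)]] a(2)]] by simp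
    qed
    then show "x \<in> Jd" unfolding Jd_def x using ab pin_mult[OF a(1) b(1)] idl_0[OF subr_S4 I] by blast
  qed
qed (auto intro: Jd_0 Jd_add Jd_mult)

lemma TQ_Jd: "TQ I \<subseteq> Jd"
  unfolding TQ_def
proof (rule ig_least[OF subr_S8])
  show "I \<union> prime_copy ` I \<subseteq> Jd"
  proof
    fix x assume "x \<in> I \<union> prime_copy ` I"
    then show "x \<in> Jd"
    proof
      assume xI: "x \<in> I"
      have xS: "x \<in> S4" using idl_sub[OF subr_S4 I xI] .
      have "collapse (pderiv_var (i + 4) x) - pderiv_var i 0 = 0" for i
        using pderiv_pin_zero[OF xS, of "i + 4"] by simp
      then have "\<forall>i<4. collapse (pderiv_var (i + 4) x) - pderiv_var i 0 \<in> I"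
        using idl_0[OF subr_S4 I] by simp
      moreover have "collapse x \<in> I" using collapse_id[OF xS] xI by simp
      ultimately show "x \<in> Jd" unfolding Jd_def using S4_S8[OF xS] idl_0[OF subr_S4 I] by blast
    next
      assume "x \<in> prime_copy ` I"
      then obtain f where f: "f \<in> I" "x = prime_copy f" by blast
      have fS: "f \<in> S4" using idl_sub[OF subr_S4 I f(1)] .
      have "collapse (pderiv_var (i + 4) x) - pderiv_var i f = 0" for i
        using deriv_prime[OF fS, of i] f(2) by simp
      then have "\<forall>i<4. collapse (pderiv_var (i + 4) x) - pderiv_var i f \<in> I"
        using idl_0[OF subr_S4 I] by simp
      moreover have "collapse x \<in> I" using collapse_prime[OF fS] f by simp
      ultimately show "x \<in> Jd" unfolding Jd_def using prime_S8[OF fS] f by blast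
    qed
  qed
qed (auto intro: Jd_0 Jd_add Jd_mult)

lemma N_Jd: "Nt I \<subseteq> Jd"
  unfolding Nt_def using M_Jd TQ_Jd by (intro ig_least[OF subr_S8]) (auto intro: Jd_0 Jd_add Jd_mult)

lemma part3_fwd:
  assumes g: "\<forall>i<4. g i \<in> S4" and om: "omega_map g \<in> Nt I"
  shows "\<exists>F\<in>I. \<forall>i<4. g i - pderiv_var i F \<in> I"
proof -
  from N_Jd om obtain G where G: "G \<in> I" "\<forall>i<4. collapse (pderiv_var (i + 4) (omega_map g)) - pderiv_var i G \<in> I"
    unfolding Jd_def by blast
  have "collapse (pderiv_var (i + 4) (omega_map g)) = g i" if "i < 4" for i
    using deriv_omega[of g i] g that collapse_id by auto
  then show ?thesis using G by auto
qed

lemma part3_bwd: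
  assumes g: "\<forall>i<4. g i \<in> S4" and F: "F \<in> I" and gF: "\<forall>i<4. g i - pderiv_var i F \<in> I"
  shows "omega_map g \<in> Nt I"
proof -
  have FS: "F \<in> S4" using idl_sub[OF subr_S4 I F] .
  have eq: "omega_map g = (prime_copy F - F) - (prime_copy F - F - omega_map (\<lambda>i. pderiv_var i F))
     + omega_map (\<lambda>i. g i - pderiv_var i F)"
    by (simp add: omega_add)
  have t1: "prime_copy F - F \<in> Nt I" using idl_diff[OF subr_S8 NI[OF I] prime_N[OF I F] I_N[OF I F]] .
  have t2: "prime_copy F - F - omega_map (\<lambda>i. pderiv_var i F) \<in> Nt I" using taylor4[OF I FS] .
  have t3: "omega_map (\<lambda>i. g i - pderiv_var i F) \<in> Nt I"
    unfolding omega_map_def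
  proof (rule idl_sum[OF subr_S8 NI[OF I]], simp)
    fix i assume i: "i \<in> {..<4::nat}"
    then have "g i - pderiv_var i F \<in> Nt I" using gF I_N[OF I] by simp
    then show "(g i - pderiv_var i F) * (Var (i + 4) - Var i) \<in> Nt I"
      using i idl_mult_right[OF subr_S8 NI[OF I] pin_diff[OF pin_Var pin_Var]] by simp
  qed
  show ?thesis unfolding eq using t1 t2 t3 idl_add[OF subr_S8 NI[OF I]] idl_diff[OF subr_S8 NI[OF I]] by blast
qed

lemma part4:
  assumes w: "w \<in> Jt I"
  shows "\<exists>g. (\<forall>i<4. g i \<in> S4) \<and> w - omega_map g \<in> Nt I"
proof -
  from w have wS: "w \<in> S8" and cw: "collapse w \<in> I" by (auto simp: Jt_def)
  obtain g where g: "\<forall>i<4. g i \<in> S4" "w - collapse w - omega_map g \<in> Nt I" using taylor8[OF I wS] by blast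
  have "w - omega_map g = (w - collapse w - omega_map g) + collapse w" by simp
  then have "w - omega_map g \<in> Nt I" using idl_add[OF subr_S8 NI[OF I] g(2) I_N[OF I cw]] by simp
  then show ?thesis using g by blast
qed

end


theorem theorem3p5:
  fixes X :: "('k::field_char_0) pt set" and m :: "'k pt \<Rightarrow> nat"
  assumes finX: "finite X"
    and valid: "\<forall>P\<in>X. valid_pt P"
    and distinct: "\<forall>P\<in>X. \<forall>P'\<in>X. same_pt P P' \<longrightarrow> P = P'"
    and mpos: "\<forall>P\<in>X. 0 < m P"
  defines "IY \<equiv> fat_ideal X m"
    and "IV \<equiv> fat_ideal X (\<lambda>P. m P + 1)"
  shows
    \<comment> \<open>the first map F + I_V \<mapsto> (dF mod I_Y) is well defined\<close>
    "(\<forall>F\<in>IV. \<forall>i<4. pderiv_var i F \<in> IY)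
     \<comment> \<open>exactness at I_Y/I_V (injectivity)\<close>
   \<and> (\<forall>F\<in>IY. (\<forall>i<4. pderiv_var i F \<in> IY) \<longrightarrow> F \<in> IV)
     \<comment> \<open>exactness at R_Y^4: kernel of second map = image of first map\<close>
   \<and> (\<forall>g. (\<forall>i<4. g i \<in> S4) \<longrightarrow>
          (omega_map g \<in> Nt IY \<longleftrightarrow> (\<exists>F\<in>IY. \<forall>i<4. g i - pderiv_var i F \<in> IY)))
     \<comment> \<open>exactness at Omega (surjectivity)\<close>
   \<and> (\<forall>w\<in>Jt IY. \<exists>g. (\<forall>i<4. g i \<in> S4) \<and> w - omega_map g \<in> Nt IY)"
proof -
  have I: "is_ideal S4 IY" unfolding IY_def by (rule fat_ideal_ideal)
  have p1: "\<forall>F\<in>IV. \<forall>i<4. pderiv_var i F \<in> IY"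
    unfolding IV_def IY_def using part1 by blast
  have p2: "\<forall>F\<in>IY. (\<forall>i<4. pderiv_var i F \<in> IY) \<longrightarrow> F \<in> IV"
    unfolding IV_def IY_def using part2[OF valid mpos] by blast
  have p3: "\<forall>g. (\<forall>i<4. g i \<in> S4) \<longrightarrow>
          (omega_map g \<in> Nt IY \<longleftrightarrow> (\<exists>F\<in>IY. \<forall>i<4. g i - pderiv_var i F \<in> IY))"
    using part3_fwd[OF I] part3_bwd[OF I] by blast
  have p4: "\<forall>w\<in>Jt IY. \<exists>g. (\<forall>i<4. g i \<in> S4) \<and> w - omega_map g \<in> Nt IY"
    using part4[OF I] by blast
  show ?thesis using p1 p2 p3 p4 by blast
qed

end
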